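(* Let $p\ge 3$ and let $m_0,\dots,m_{p-1}$ be positive integers with $m=\sum_{i=0}^{p-1}m_i$ and $m_i<\lfloor m/2\rfloor$ for all $i$. Consider homogeneous communication parameters $\gamma=\beta=1$ and $0<\alpha<1$ with $\lceil\log_2 p\rceil\alpha<1$. Then every communication tree on $\{0,\dots,p-1\}$ that has minimum completion time among all such trees (with any root) has a root with at least two children, and its completion time is at least $m+2\alpha$.
   Context: Processors $0,\dots,p-1$; processor $i$ has a data block of size $m_i$; $\mathrm{Size}(R)=\sum_{i\in R}m_i$. Transmitting $s$ units between any two processors costs $\alpha+\beta s$; local copying of $s$ units costs $\gamma s$. A communication tree on a nonempty set $R$ with root $r\in R$ is either trivial ($R=\{r\}$), or the root $r$ with a sequence of entries $(E_0,\dots,E_j)$ where exactly one entry is a "local copy" marker, every other entry is a communication tree on a set $R_t$ with root $r_t$ (the children of $r$ are these $r_t$), there is at least one tree entry, and $\{r\}$ together with the $R_t$ partition $R$. Completion time: trivial tree $0$; otherwise $c_{-1}=0$, $c_t=c_{t-1}+\gamma m_r$ for the copy marker, $c_t=\max(c_{t-1},\mathrm{cost}(E_t))+\alpha+\beta\,\mathrm{Size}(R_t)$ for a tree entry; $\mathrm{cost}=c_j$. *)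

theory Defs
  imports Complex_Main
begin

text \<open>A communication tree: a root processor together with a sequence of entries.
  An entry is either the local-copy marker or a subtree.\<close>

datatype ctree = Node nat "centry list"
     and centry = Copy | Sub ctree

primrec croot :: "ctree \<Rightarrow> nat" where
  "croot (Node r es) = r"

primrec subtrees :: "centry list \<Rightarrow> ctree list" where
  "subtrees [] = []"
| "subtrees (e # es) = (case e of Copy \<Rightarrow> subtrees es | Sub t \<Rightarrow> t # subtrees es)"

fun nodes :: "ctree \<Rightarrow> nat set"
and nodes_es :: "centry list \<Rightarrow> nat set" where
  "nodes (Node r es) = insert r (nodes_es es)"
| "nodes_es [] = {}"
| "nodes_es (Copy # es) = nodes_es es"
| "nodes_es (Sub t # es) = nodes t \<union> nodes_es es"

fun ctree_wf :: "ctree \<Rightarrow> bool"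
and ctree_wf_es :: "centry list \<Rightarrow> bool" where
  "ctree_wf (Node r es) =
     (es = [] \<or>
      (length (filter (\<lambda>e. e = Copy) es) = 1 \<and>
       subtrees es \<noteq> [] \<and>
       ctree_wf_es es \<and>
       r \<notin> nodes_es es \<and>
       (\<forall>i < length (subtrees es). \<forall>j < length (subtrees es).
          i \<noteq> j \<longrightarrow> nodes (subtrees es ! i) \<inter> nodes (subtrees es ! j) = {})))"
| "ctree_wf_es [] = True"
| "ctree_wf_es (Copy # es) = ctree_wf_es es"
| "ctree_wf_es (Sub t # es) = (ctree_wf t \<and> ctree_wf_es es)"

definition Size :: "(nat \<Rightarrow> nat) \<Rightarrow> nat set \<Rightarrow> real" where
  "Size m R = (\<Sum>i\<in>R. real (m i))"

fun ctime :: "real \<Rightarrow> real \<Rightarrow> real \<Rightarrow> (nat \<Rightarrow> nat) \<Rightarrow> ctree \<Rightarrow> real"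
and ctime_es :: "real \<Rightarrow> real \<Rightarrow> real \<Rightarrow> (nat \<Rightarrow> nat) \<Rightarrow> nat \<Rightarrow> real \<Rightarrow> centry list \<Rightarrow> real" where
  "ctime \<alpha> \<beta> \<gamma> m (Node r es) = (if es = [] then 0 else ctime_es \<alpha> \<beta> \<gamma> m r 0 es)"
| "ctime_es \<alpha> \<beta> \<gamma> m r c [] = c"
| "ctime_es \<alpha> \<beta> \<gamma> m r c (Copy # es) = ctime_es \<alpha> \<beta> \<gamma> m r (c + \<gamma> * real (m r)) es"
| "ctime_es \<alpha> \<beta> \<gamma> m r c (Sub t # es) =
     ctime_es \<alpha> \<beta> \<gamma> m r (max c (ctime \<alpha> \<beta> \<gamma> m t) + \<alpha> + \<beta> * Size m (nodes t)) es"

primrec root_children :: "ctree \<Rightarrow> nat" where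
  "root_children (Node r es) = length (subtrees es)"

end

theory Submission imports Defs begin

lemma finite_nodes: "finite (nodes t)" "finite (nodes_es es)"
  by (induction t and es rule: nodes_nodes_es.induct) auto

lemma subtrees_append[simp]: "subtrees (xs @ ys) = subtrees xs @ subtrees ys"
  by (induction xs) (auto split: centry.splits)

lemma nodes_es_append[simp]: "nodes_es (xs @ ys) = nodes_es xs \<union> nodes_es ys"
proof (induction xs)
  case (Cons e xs) then show ?case by (cases e) auto
qed simp

lemma wf_es_append[simp]: "ctree_wf_es (xs @ ys) = (ctree_wf_es xs \<and> ctree_wf_es ys)"
proof (induction xs)
  case (Cons e xs) then show ?case by (cases e) auto
qed simp

lemma nodes_es_subtrees: "nodes_es es = (\<Union>t\<in>set (subtrees es). nodes t)"
proof (induction es)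
  case (Cons e xs) then show ?case by (cases e) auto
qed simp

lemma ctime_es_append: "ctime_es a b g m r c (xs @ ys) = ctime_es a b g m r (ctime_es a b g m r c xs) ys"
proof (induction xs arbitrary: c)
  case (Cons e xs) then show ?case by (cases e) auto
qed simp

lemma Size_nonneg: "0 \<le> Size m S"
  unfolding Size_def by (simp add: sum_nonneg)

lemma Size_union: "finite A \<Longrightarrow> finite B \<Longrightarrow> A \<inter> B = {} \<Longrightarrow> Size m (A \<union> B) = Size m A + Size m B"
  unfolding Size_def by (simp add: sum.union_disjoint)

lemma Size_insert: "finite A \<Longrightarrow> r \<notin> A \<Longrightarrow> Size m (insert r A) = real (m r) + Size m A"
  unfolding Size_def by simp

lemma L1: "0 \<le> a \<Longrightarrow> c \<le> ctime_es a 1 1 m r c es"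
proof (induction es arbitrary: c)
  case (Cons e xs) then show ?case
  proof (cases e)
    case Copy then show ?thesis using Cons by (simp, smt (verit) Cons.IH of_nat_0_le_iff)
  next
    case (Sub t) then show ?thesis using Cons Size_nonneg[of m "nodes t"]
      by (simp, smt (verit) Cons.IH)
  qed
qed simp

lemma L2: "0 \<le> a \<Longrightarrow> c + real (length (filter (\<lambda>e. e = Copy) es)) * real (m r)
   + real (length (subtrees es)) * a + (\<Sum>t\<leftarrow>subtrees es. Size m (nodes t)) \<le> ctime_es a 1 1 m r c es"
proof (induction es arbitrary: c)
  case (Cons e xs) then show ?case
  proof (cases e)
    case Copy then show ?thesis using Cons.IH[of "c + real (m r)"] Cons.prems by (simp add: algebra_simps)
  next
    case (Sub t) then show ?thesis using Cons.IH[of "max c (ctime a 1 1 m t) + a + Size m (nodes t)"] Cons.prems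
      by (simp add: algebra_simps)
  qed
qed simp

lemma L3: "0 \<le> a \<Longrightarrow> t \<in> set (subtrees es) \<Longrightarrow> ctime a 1 1 m t + a + Size m (nodes t) \<le> ctime_es a 1 1 m r c es"
proof (induction es arbitrary: c)
  case (Cons e xs) then show ?case
  proof (cases e)
    case Copy then show ?thesis using Cons by simp
  next
    case (Sub t0)
    let ?c = "max c (ctime a 1 1 m t0) + a + Size m (nodes t0)"
    have e: "ctime_es a 1 1 m r c (e # xs) = ctime_es a 1 1 m r ?c xs" using Sub by simp
    show ?thesis
    proof (cases "t = t0")
      case True
      then show ?thesis using e L1[of a ?c m r xs] Cons.prems by simp
    next
      case False
      then have "t \<in> set (subtrees xs)" using Cons.prems Sub by simp
      then show ?thesis using e Cons.IH[of ?c] Cons.prems by simp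
    qed
  qed
qed simp

lemma size_subtrees: "(\<forall>i<length L. \<forall>j<length L. i\<noteq>j \<longrightarrow> nodes (L!i) \<inter> nodes (L!j) = {}) \<Longrightarrow>
   Size m (\<Union>t\<in>set L. nodes t) = (\<Sum>t\<leftarrow>L. Size m (nodes t))"
proof (induction L)
  case (Cons a L)
  have h: "\<forall>i<length L. \<forall>j<length L. i\<noteq>j \<longrightarrow> nodes (L!i) \<inter> nodes (L!j) = {}"
  proof (intro allI impI)
    fix i j assume "i < length L" "j < length L" "i \<noteq> j"
    then show "nodes (L!i) \<inter> nodes (L!j) = {}" using Cons.prems[rule_format, of "Suc i" "Suc j"] by simp
  qed
  have d: "nodes a \<inter> (\<Union>t\<in>set L. nodes t) = {}"
  proof -
    { fix t assume "t \<in> set L"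
      then obtain j where "j < length L" "t = L ! j" by (metis in_set_conv_nth)
      then have "nodes a \<inter> nodes t = {}" using Cons.prems[rule_format, of 0 "Suc j"] by simp }
    then show ?thesis by blast
  qed
  show ?case using Cons.IH[OF h] d by (simp add: Size_union finite_nodes)
qed (simp add: Size_def)

lemma lower: assumes "0 \<le> a" "ctree_wf (Node r es)" "es \<noteq> []"
  shows "real (length (subtrees es)) * a + Size m (nodes (Node r es)) \<le> ctime a 1 1 m (Node r es)"
proof -
  have w: "length (filter (\<lambda>e. e = Copy) es) = 1" "r \<notin> nodes_es es"
    "\<forall>i<length (subtrees es). \<forall>j<length (subtrees es). i \<noteq> j \<longrightarrow> nodes (subtrees es ! i) \<inter> nodes (subtrees es ! j) = {}"
    using assms by auto
  have "Size m (nodes (Node r es)) = real (m r) + (\<Sum>t\<leftarrow>subtrees es. Size m (nodes t))"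
    using w size_subtrees[OF w(3), of m] by (simp add: Size_insert finite_nodes nodes_es_subtrees[symmetric])
  then show ?thesis using L2[OF assms(1), of 0 es m r] w assms(3) by simp
qed

lemma subtree_nodes: "t \<in> set (subtrees es) \<Longrightarrow> nodes t \<subseteq> nodes_es es"
  by (auto simp: nodes_es_subtrees)

lemma combine:
  assumes a: "0 \<le> a" and wX: "ctree_wf TX" and nX: "nodes TX = X" and cX: "ctime a 1 1 m TX \<le> Size m X + real d * a"
    and wY: "ctree_wf TY" and nY: "nodes TY = Y" and cY: "ctime a 1 1 m TY \<le> Size m Y + real d * a"
    and disj: "X \<inter> Y = {}" and sz: "Size m Y \<le> Size m X" and Yne: "Y \<noteq> {}"
  shows "\<exists>T. ctree_wf T \<and> nodes T = X \<union> Y \<and> ctime a 1 1 m T \<le> Size m (X \<union> Y) + real (Suc d) * a"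
proof -
  obtain r esX where TX: "TX = Node r esX" by (cases TX)
  have fin: "finite X" "finite Y" using nX nY finite_nodes by auto
  have SU: "Size m (X \<union> Y) = Size m X + Size m Y" using Size_union[OF fin disj] .
  have rX: "r \<in> X" using nX TX by auto
  show ?thesis
  proof (cases "esX = []")
    case True
    let ?T = "Node r [Copy, Sub TY]"
    have X1: "X = {r}" using nX TX True by simp
    have "ctree_wf ?T" using wY nY disj X1 by auto
    moreover have "nodes ?T = X \<union> Y" using X1 nY by auto
    moreover have "ctime a 1 1 m ?T \<le> Size m (X \<union> Y) + real (Suc d) * a"
    proof -
      have "ctime a 1 1 m ?T = max (real (m r)) (ctime a 1 1 m TY) + a + Size m Y" using nY by simp
      moreover have "Size m X = real (m r)" using X1 by (simp add: Size_def)
      moreover have "0 \<le> real d * a" using a by simp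
      ultimately show ?thesis using SU cY sz by (simp add: algebra_simps)
    qed
    ultimately show ?thesis by blast
  next
    case False
    let ?es = "esX @ [Sub TY]"
    let ?T = "Node r ?es"
    have w: "length (filter (\<lambda>e. e = Copy) esX) = 1" "subtrees esX \<noteq> []" "ctree_wf_es esX"
      "r \<notin> nodes_es esX"
      "\<forall>i<length (subtrees esX). \<forall>j<length (subtrees esX). i \<noteq> j \<longrightarrow> nodes (subtrees esX ! i) \<inter> nodes (subtrees esX ! j) = {}"
      using wX TX False by auto
    have sub: "nodes_es esX \<subseteq> X" using nX TX by auto
    have pw: "\<forall>i<length (subtrees ?es). \<forall>j<length (subtrees ?es). i \<noteq> j \<longrightarrow> nodes (subtrees ?es ! i) \<inter> nodes (subtrees ?es ! j) = {}"
    proof (intro allI impI)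
      fix i j assume i: "i < length (subtrees ?es)" and j: "j < length (subtrees ?es)" and ij: "i \<noteq> j"
      let ?L = "subtrees esX"
      have len: "length (subtrees ?es) = Suc (length ?L)" by simp
      have gen: "nodes (?L ! k) \<inter> Y = {}" if "k < length ?L" for k
      proof -
        have "?L ! k \<in> set ?L" using that by simp
        then have "nodes (?L ! k) \<subseteq> X" using subtree_nodes sub by blast
        then show ?thesis using disj by blast
      qed
      show "nodes (subtrees ?es ! i) \<inter> nodes (subtrees ?es ! j) = {}"
      proof (cases "i < length ?L")
        case True
        show ?thesis
        proof (cases "j < length ?L")
          case True
          then show ?thesis using \<open>i < length ?L\<close> w(5) ij by (simp add: nth_append)
        next
          case False
          then have "j = length ?L" using j len by simp
          then show ?thesis using \<open>i < length ?L\<close> gen[of i] nY by (simp add: nth_append)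
        qed
      next
        case False
        then have "i = length ?L" using i len by simp
        then have "j < length ?L" using j ij len by simp
        then show ?thesis using \<open>i = length ?L\<close> gen[of j] nY by (auto simp: nth_append)
      qed
    qed
    have "ctree_wf ?T" using w pw wY nY disj rX by auto
    moreover have "nodes ?T = X \<union> Y" using nX TX nY by auto
    moreover have "ctime a 1 1 m ?T \<le> Size m (X \<union> Y) + real (Suc d) * a"
    proof -
      have "ctime a 1 1 m ?T = max (ctime a 1 1 m TX) (ctime a 1 1 m TY) + a + Size m Y"
        using nY TX False by (simp add: ctime_es_append)
      then show ?thesis using SU cY cX sz by (simp add: algebra_simps)
    qed
    ultimately show ?thesis by blast
  qed
qed

lemma construct: "0 \<le> a \<Longrightarrow> finite S \<Longrightarrow> S \<noteq> {} \<Longrightarrow> card S \<le> 2^d \<Longrightarrow>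
  \<exists>T. ctree_wf T \<and> nodes T = S \<and> ctime a 1 1 m T \<le> Size m S + real d * a"
proof (induction d arbitrary: S)
  case 0
  have "card S \<noteq> 0" using 0 card_0_eq[of S] by simp
  then have "card S = 1" using 0(4) by simp
  then obtain r where S: "S = {r}" by (metis card_1_singletonE)
  have "ctree_wf (Node r []) \<and> nodes (Node r []) = S \<and> ctime a 1 1 m (Node r []) \<le> Size m S + real 0 * a"
    using S Size_nonneg[of m S] by simp
  then show ?case by blast
next
  case (Suc d)
  show ?case
  proof (cases "card S = 1")
    case True
    then obtain r where S: "S = {r}" by (metis card_1_singletonE)
    have "ctree_wf (Node r []) \<and> nodes (Node r []) = S \<and> ctime a 1 1 m (Node r []) \<le> Size m S + real (Suc d) * a"
      using S Size_nonneg[of m S] Suc.prems(1) by simp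
    then show ?thesis by blast
  next
    case False
    then have c2: "card S \<ge> 2" using Suc.prems card_0_eq by fastforce
    obtain A where A: "A \<subseteq> S" "card A = card S div 2" using obtain_subset_with_card_n[of "card S div 2" S] by auto
    define B where "B = S - A"
    have fA: "finite A" using A Suc.prems finite_subset by blast
    have cB: "card B = card S - card S div 2" unfolding B_def using A Suc.prems by (simp add: card_Diff_subset fA)
    have Ane: "A \<noteq> {}" using A c2 by auto
    have Bne: "B \<noteq> {}" using cB c2 by auto
    have fB: "finite B" using Suc.prems B_def by simp
    have cAd: "card A \<le> 2^d" using A Suc.prems by simp
    have cBd: "card B \<le> 2^d" using cB Suc.prems by simp
    obtain TA where TA: "ctree_wf TA" "nodes TA = A" "ctime a 1 1 m TA \<le> Size m A + real d * a"
      using Suc.IH[OF Suc.prems(1) fA Ane cAd] by blast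
    obtain TB where TB: "ctree_wf TB" "nodes TB = B" "ctime a 1 1 m TB \<le> Size m B + real d * a"
      using Suc.IH[OF Suc.prems(1) fB Bne cBd] by blast
    have disj: "A \<inter> B = {}" "B \<inter> A = {}" unfolding B_def by auto
    have SAB: "S = A \<union> B" "S = B \<union> A" unfolding B_def using A by auto
    show ?thesis
    proof (cases "Size m B \<le> Size m A")
      case True
      show ?thesis using combine[OF Suc.prems(1) TA TB disj(1) True Bne] SAB by simp
    next
      case False
      show ?thesis using combine[OF Suc.prems(1) TB TA disj(2) _ Ane] False SAB by simp
    qed
  qed
qed

theorem lemma1:
  fixes p :: nat and m :: "nat \<Rightarrow> nat" and \<alpha> :: real and T :: ctree
  assumes "p \<ge> 3"
    and "\<forall>i<p. m i > 0"
    and "\<forall>i<p. m i < (\<Sum>j<p. m j) div 2"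
    and "0 < \<alpha>" and "\<alpha> < 1"
    and "real_of_int \<lceil>log 2 (real p)\<rceil> * \<alpha> < 1"
    and "ctree_wf T" and "nodes T = {..<p}"
    and "\<forall>T'. ctree_wf T' \<and> nodes T' = {..<p} \<longrightarrow> ctime \<alpha> 1 1 m T \<le> ctime \<alpha> 1 1 m T'"
  shows "root_children T \<ge> 2 \<and> ctime \<alpha> 1 1 m T \<ge> real (\<Sum>j<p. m j) + 2 * \<alpha>"
proof -
  let ?M = "(\<Sum>j<p. m j)"
  have a0: "0 \<le> \<alpha>" using assms(4) by simp
  have SM: "Size m {..<p} = real ?M" unfolding Size_def by simp
  obtain r es where T: "T = Node r es" by (cases T)
  have rp: "r < p" using assms(8) T by auto
  have esne: "es \<noteq> []"
  proof
    assume "es = []"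
    then have "{..<p} = {r}" using assms(8) T by simp
    then have "card {..<p} = 1" by simp
    then show False using assms(1) by simp
  qed
  have w: "subtrees es \<noteq> []" "ctree_wf_es es" "r \<notin> nodes_es es" using assms(7) T esne by auto
  have low: "real (length (subtrees es)) * \<alpha> + real ?M \<le> ctime \<alpha> 1 1 m T"
    using lower[OF a0, of r es m] assms(7) T esne assms(8) SM by simp
  have k2: "length (subtrees es) \<ge> 2"
  proof (rule ccontr)
    assume "\<not> ?thesis"
    with w(1) obtain t where st: "subtrees es = [t]"
      by (cases "subtrees es"; cases "tl (subtrees es)") auto
    have wfes: "\<And>t. t \<in> set (subtrees es) \<Longrightarrow> ctree_wf t"
    proof -
      fix t show "t \<in> set (subtrees es) \<Longrightarrow> ctree_wf t" using w(2)
      proof (induction es)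
        case (Cons e xs) then show ?case by (cases e) auto
      qed simp
    qed
    have wt: "ctree_wf t" using wfes st by simp
    have nt: "nodes t = {..<p} - {r}"
      using assms(8) T w(3) nodes_es_subtrees[of es] st by auto
    have ct: "card (nodes t) = p - 1" using nt rp by simp
    obtain r' es' where t: "t = Node r' es'" by (cases t)
    have es'ne: "es' \<noteq> []"
    proof
      assume "es' = []"
      then have "card (nodes t) = 1" using t by simp
      then show False using ct assms(1) by simp
    qed
    have "subtrees es' \<noteq> []" using wt t es'ne by auto
    then have "1 \<le> length (subtrees es')" by (cases "subtrees es'") auto
    then have "real 1 * \<alpha> \<le> real (length (subtrees es')) * \<alpha>" using a0
      by (intro mult_right_mono) auto
    then have lt: "\<alpha> + Size m (nodes t) \<le> ctime \<alpha> 1 1 m t"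
      using lower[OF a0, of r' es' m] wt t es'ne by simp
    have "ctime \<alpha> 1 1 m t + \<alpha> + Size m (nodes t) \<le> ctime \<alpha> 1 1 m T"
      using L3[OF a0, of t es m r 0] st T esne by simp
    moreover have "Size m (nodes t) = real ?M - real (m r)"
    proof -
      have "Size m {..<p} = Size m (insert r (nodes t))" using nt rp by (metis insert_Diff lessThan_iff)
      also have "\<dots> = real (m r) + Size m (nodes t)" using nt by (intro Size_insert) auto
      finally show ?thesis using SM by simp
    qed
    moreover have "2 * m r + 2 \<le> ?M" using assms(3) rp by auto
    ultimately have big: "real ?M + 2 + 2 * \<alpha> \<le> ctime \<alpha> 1 1 m T" using lt by linarith
    define d where "d = nat \<lceil>log 2 (real p)\<rceil>"
    have lg0: "0 \<le> log 2 (real p)" using assms(1) by simp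
    have dint: "real d = real_of_int \<lceil>log 2 (real p)\<rceil>" unfolding d_def using lg0 by simp
    have "real p = 2 powr (log 2 (real p))" using assms(1) by simp
    also have "\<dots> \<le> 2 powr (real d)" using dint by (intro powr_mono) auto
    also have "\<dots> = 2 ^ d" by (simp add: powr_realpow)
    finally have "real p \<le> 2 ^ d" .
    then have cp: "card {..<p} \<le> 2 ^ d" by (simp add: of_nat_le_iff[symmetric] del: of_nat_le_iff) 
    obtain T' where T': "ctree_wf T'" "nodes T' = {..<p}" "ctime \<alpha> 1 1 m T' \<le> Size m {..<p} + real d * \<alpha>"
    proof -
      have "0 \<in> {..<p}" using assms(1) by simp
      then have "{..<p} \<noteq> {}" by blast
      then show ?thesis using that construct[OF a0, of "{..<p}" d m] cp by blast
    qed
    have "ctime \<alpha> 1 1 m T \<le> ctime \<alpha> 1 1 m T'" using assms(9) T' by blast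
    moreover have "real d * \<alpha> < 1" using dint assms(6) by simp
    ultimately show False using T'(3) SM big assms(4) by linarith
  qed
  have "real 2 * \<alpha> \<le> real (length (subtrees es)) * \<alpha>" using k2 a0 by (intro mult_right_mono) auto
  then show ?thesis using low k2 T by simp
qed

end
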